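(* Let $\Delta$ be a complete unimodular fan in $N_\mathbb R$, $\Sigma$ a tropical cycle in $N_\mathbb R$ compatible with $\Delta$, and $\tau\in\Delta$. Then $\rho(\overline\Sigma\cap O(\tau))=\overline{\rho(\Sigma)}\cap O(\tau)$ as tropical cycles in $O(\tau)$.
   Context: $N_\mathbb R(\Delta)=\bigsqcup_{\tau\in\Delta}O(\tau)$, $O(\tau)=N_\mathbb R/\mathbb R\tau$, closures taken in $N_\mathbb R(\Delta)$; for $\Sigma$ compatible with $\Delta$ (for each polyhedron $P$ of $\Sigma$ and $\sigma\in\Delta$, either $\sigma\subseteq\rho(P)$ or $\mathrm{relint}(\sigma)\cap\rho(P)=\emptyset$, $\rho$ = recession cone), $\overline\Sigma\cap O(\tau)=\bigcup_{\tau\subseteq\rho(\sigma)}\pi_\tau(\sigma)$ is a tropical cycle with the weights of the corresponding faces of $\Sigma$. The recession fan $\rho(\Sigma)$ of a tropical cycle $\Sigma$ (with a polyhedral structure such that each $\rho(\sigma)$ is a cone of a fan) is the fan of the cones $\rho(\sigma)$, where a maximal cone $\tau'$ gets weight $m(\tau')=\sum_{\sigma\in\Sigma,\rho(\sigma)=\tau'}m(\sigma)$; this is a balanced fan. *)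

theory Defs
  imports "HOL-Analysis.Analysis"
begin

text \<open>Ambient space N_R = real^'n, lattice N = integer vectors.\<close>

definition lat_vec :: "real^'n \<Rightarrow> bool" where
  "lat_vec v \<longleftrightarrow> (\<forall>i. v $ i \<in> \<int>)"

definition rat_polyhedron :: "(real^'n) set \<Rightarrow> bool" where
  "rat_polyhedron P \<longleftrightarrow>
     (\<exists>F :: ((real^'n) \<times> real) set. finite F \<and> (\<forall>(a,b)\<in>F. lat_vec a) \<and>
        P = {x. \<forall>(a,b)\<in>F. a \<bullet> x \<le> b})"

definition rec_cone :: "(real^'n) set \<Rightarrow> (real^'n) set" where
  "rec_cone P = {d. \<forall>x\<in>P. \<forall>t::real. t \<ge> 0 \<longrightarrow> x + t *\<^sub>R d \<in> P}"

definition pos_hull :: "(real^'n) set \<Rightarrow> (real^'n) set" where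
  "pos_hull B = {\<Sum>b\<in>B. c b *\<^sub>R b | c. \<forall>b\<in>B. c b \<ge> 0}"

definition int_span :: "(real^'n) set \<Rightarrow> (real^'n) set" where
  "int_span B = {\<Sum>b\<in>B. of_int (c b) *\<^sub>R b | c. True}"

text \<open>A unimodular cone: generated by part of a lattice basis (linearly independent
  lattice vectors spanning a saturated sublattice).\<close>
definition unimodular_cone :: "(real^'n) set \<Rightarrow> bool" where
  "unimodular_cone \<sigma> \<longleftrightarrow>
     (\<exists>B. finite B \<and> independent B \<and> (\<forall>b\<in>B. lat_vec b) \<and> \<sigma> = pos_hull B \<and>
          (\<forall>v. lat_vec v \<and> v \<in> span B \<longrightarrow> v \<in> int_span B))"

definition is_fan :: "(real^'n) set set \<Rightarrow> bool" where
  "is_fan \<Delta> \<longleftrightarrow> finite \<Delta> \<and> \<Delta> \<noteq> {} \<and>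
     (\<forall>\<sigma>\<in>\<Delta>. rat_polyhedron \<sigma> \<and> cone \<sigma> \<and> \<sigma> \<noteq> {} \<and> \<sigma> \<inter> uminus ` \<sigma> = {0}) \<and>
     (\<forall>\<sigma>\<in>\<Delta>. \<forall>F. F face_of \<sigma> \<and> F \<noteq> {} \<longrightarrow> F \<in> \<Delta>) \<and>
     (\<forall>\<sigma>\<in>\<Delta>. \<forall>\<sigma>'\<in>\<Delta>. (\<sigma> \<inter> \<sigma>') face_of \<sigma>)"

definition complete_unimodular_fan :: "(real^'n) set set \<Rightarrow> bool" where
  "complete_unimodular_fan \<Delta> \<longleftrightarrow> is_fan \<Delta> \<and> \<Union>\<Delta> = UNIV \<and> (\<forall>\<sigma>\<in>\<Delta>. unimodular_cone \<sigma>)"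

definition polyhedral_complex :: "(real^'n) set set \<Rightarrow> bool" where
  "polyhedral_complex S \<longleftrightarrow> finite S \<and> (\<forall>P\<in>S. rat_polyhedron P \<and> P \<noteq> {}) \<and>
     (\<forall>P\<in>S. \<forall>F. F face_of P \<and> F \<noteq> {} \<longrightarrow> F \<in> S) \<and>
     (\<forall>P\<in>S. \<forall>Q\<in>S. P \<inter> Q \<noteq> {} \<longrightarrow> (P \<inter> Q) face_of P)"

definition lin_space :: "(real^'n) set \<Rightarrow> (real^'n) set" where
  "lin_space P = span {x - y | x y. x \<in> P \<and> y \<in> P}"

text \<open>u is a lattice normal vector of the facet \<nu> of \<sigma>: it is a lattice vector in the
  linear space of \<sigma> whose class generates (L_\<sigma> \<inter> N)/(L_\<nu> \<inter> N), pointing into \<sigma>.\<close>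
definition lattice_normal :: "(real^'n) set \<Rightarrow> (real^'n) set \<Rightarrow> real^'n \<Rightarrow> bool" where
  "lattice_normal \<sigma> \<nu> u \<longleftrightarrow> lat_vec u \<and> u \<in> lin_space \<sigma> \<and>
     (\<forall>v. lat_vec v \<and> v \<in> lin_space \<sigma> \<longrightarrow>
        (\<exists>c::int. \<exists>w. lat_vec w \<and> w \<in> lin_space \<nu> \<and> v = of_int c *\<^sub>R u + w)) \<and>
     (\<exists>x\<in>\<nu>. \<exists>e>0. x + e *\<^sub>R u \<in> \<sigma>)"

definition balanced :: "(real^'n) set set \<Rightarrow> ((real^'n) set \<Rightarrow> int) \<Rightarrow> nat \<Rightarrow> bool" where
  "balanced S m k \<longleftrightarrow>
     (\<forall>\<nu>\<in>S. aff_dim \<nu> = int k - 1 \<longrightarrow>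
        (\<exists>u. (\<forall>\<sigma>\<in>S. aff_dim \<sigma> = int k \<and> \<nu> \<subseteq> \<sigma> \<longrightarrow> lattice_normal \<sigma> \<nu> (u \<sigma>)) \<and>
             (\<Sum>\<sigma>\<in>{\<sigma>\<in>S. aff_dim \<sigma> = int k \<and> \<nu> \<subseteq> \<sigma>}. of_int (m \<sigma>) *\<^sub>R u \<sigma>) \<in> lin_space \<nu>))"

definition tropical_cycle :: "(real^'n) set set \<Rightarrow> ((real^'n) set \<Rightarrow> int) \<Rightarrow> nat \<Rightarrow> bool" where
  "tropical_cycle S m k \<longleftrightarrow> polyhedral_complex S \<and>
     (\<forall>P\<in>S. \<exists>Q\<in>S. P \<subseteq> Q \<and> aff_dim Q = int k) \<and> balanced S m k"

definition compatible :: "(real^'n) set set \<Rightarrow> (real^'n) set set \<Rightarrow> bool" where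
  "compatible \<Delta> S \<longleftrightarrow>
     (\<forall>P\<in>S. \<forall>\<sigma>\<in>\<Delta>. \<sigma> \<subseteq> rec_cone P \<or> rel_interior \<sigma> \<inter> rec_cone P = {})"

text \<open>A weighted family is a finitely supported function from polyhedra to weights.
  Cycles in O(\<tau>) = N_R / span \<tau> are represented by pulling back along the projection
  \<pi>_\<tau>: a polyhedron Q in O(\<tau>) is represented by \<pi>_\<tau>^{-1}(Q); dimensions shift by dim \<tau>.\<close>

definition cycle_wt :: "(real^'n) set set \<Rightarrow> ((real^'n) set \<Rightarrow> int) \<Rightarrow> nat \<Rightarrow> (real^'n) set \<Rightarrow> int" where
  "cycle_wt S m k P = (if P \<in> S \<and> aff_dim P = int k then m P else 0)"

text \<open>Preimage of \<pi>_\<tau>(P) under \<pi>_\<tau>.\<close>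
definition lift :: "(real^'n) set \<Rightarrow> (real^'n) set \<Rightarrow> (real^'n) set" where
  "lift \<tau> P = {x + v | x v. x \<in> P \<and> v \<in> span \<tau>}"

text \<open>Closure of a weighted family intersected with O(\<tau>):
  cells \<pi>_\<tau>(P) for \<tau> \<subseteq> \<rho>(P), with the weight of P.\<close>
definition orbit_part :: "(real^'n) set \<Rightarrow> ((real^'n) set \<Rightarrow> int) \<Rightarrow> (real^'n) set \<Rightarrow> int" where
  "orbit_part \<tau> W Q = (\<Sum>P\<in>{P. W P \<noteq> 0 \<and> \<tau> \<subseteq> rec_cone P \<and> lift \<tau> P = Q}. W P)"

text \<open>Recession fan of a weighted k-dimensional family: cone C of dimension k gets the
  sum of the weights of the cells P with \<rho>(P) = C.\<close>
definition rec_part :: "nat \<Rightarrow> ((real^'n) set \<Rightarrow> int) \<Rightarrow> (real^'n) set \<Rightarrow> int" where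
  "rec_part k W C = (\<Sum>P\<in>{P. W P \<noteq> 0 \<and> rec_cone P = C \<and> aff_dim C = int k}. W P)"

definition weight_fn :: "nat \<Rightarrow> ((real^'n) set \<Rightarrow> int) \<Rightarrow> real^'n \<Rightarrow> int" where
  "weight_fn k W x = (\<Sum>P\<in>{P. W P \<noteq> 0 \<and> aff_dim P = int k \<and> x \<in> rel_interior P}. W P)"

text \<open>Equality of k-cycles (up to refinement): the weight functions agree outside a finite
  union of polyhedra of dimension < k.\<close>
definition cycle_eq :: "nat \<Rightarrow> ((real^'n) set \<Rightarrow> int) \<Rightarrow> ((real^'n) set \<Rightarrow> int) \<Rightarrow> bool" where
  "cycle_eq k W W' \<longleftrightarrow> (\<exists>L. finite L \<and> (\<forall>P\<in>L. polyhedron P \<and> aff_dim P < int k) \<and>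
      (\<forall>x. x \<notin> \<Union>L \<longrightarrow> weight_fn k W x = weight_fn k W' x))"

end

theory Submission
  imports Defs
begin

definition Hs :: "((real^'n) \<times> real) set \<Rightarrow> (real^'n) set" where
  "Hs F = {x. \<forall>(a,b)\<in>F. a \<bullet> x \<le> b}"

lemma rec_Hs:
  assumes "Hs F \<noteq> {}"
  shows "rec_cone (Hs F) = {d. \<forall>(a,b)\<in>F. a \<bullet> d \<le> 0}"
proof
  show "{d. \<forall>(a,b)\<in>F. a \<bullet> d \<le> 0} \<subseteq> rec_cone (Hs F)"
  proof
    fix d assume d: "d \<in> {d. \<forall>(a,b)\<in>F. a \<bullet> d \<le> 0}"
    show "d \<in> rec_cone (Hs F)" unfolding rec_cone_def
    proof (intro CollectI ballI allI impI)
      fix x and t :: real assume x: "x \<in> Hs F" and t: "0 \<le> t"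
      show "x + t *\<^sub>R d \<in> Hs F" unfolding Hs_def
      proof (intro CollectI ballI, clarify)
        fix a b assume ab: "(a,b) \<in> F"
        have "a \<bullet> d \<le> 0" "a \<bullet> x \<le> b" using d x ab by (auto simp: Hs_def)
        moreover have "t * (a \<bullet> d) \<le> 0" using t \<open>a \<bullet> d \<le> 0\<close> by (simp add: mult_nonneg_nonpos)
        ultimately show "a \<bullet> (x + t *\<^sub>R d) \<le> b" by (simp add: inner_add_right)
      qed
    qed
  qed
next
  show "rec_cone (Hs F) \<subseteq> {d. \<forall>(a,b)\<in>F. a \<bullet> d \<le> 0}"
  proof (clarsimp)
    fix d a b
    assume d: "d \<in> rec_cone (Hs F)" and ab: "(a,b) \<in> F"
    obtain x where x: "x \<in> Hs F" using assms by auto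
    show "a \<bullet> d \<le> 0"
    proof (rule ccontr)
      assume "\<not> a \<bullet> d \<le> 0"
      hence pos: "a \<bullet> d > 0" by simp
      have xb: "a \<bullet> x \<le> b" using x ab by (auto simp: Hs_def)
      define t where "t = (b - a \<bullet> x) / (a \<bullet> d) + 1"
      have t0: "t \<ge> 0" unfolding t_def using pos xb by (simp add: field_simps)
      have "x + t *\<^sub>R d \<in> Hs F" using d x t0 by (auto simp: rec_cone_def)
      hence "a \<bullet> (x + t *\<^sub>R d) \<le> b" using ab by (auto simp: Hs_def)
      moreover have "a \<bullet> (x + t *\<^sub>R d) = b + a \<bullet> d"
        unfolding t_def using pos by (simp add: inner_add_right field_simps)
      ultimately show False using pos by linarith
    qed
  qed
qed


lemma line_Hs:
  assumes fin: "finite F" and u: "\<forall>(a,b)\<in>F. a \<bullet> u \<le> 0"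
  shows "{x + s *\<^sub>R u | x s. x \<in> Hs F} = Hs {(a,b)\<in>F. a \<bullet> u = 0}"
proof
  show "{x + s *\<^sub>R u | x s. x \<in> Hs F} \<subseteq> Hs {(a,b)\<in>F. a \<bullet> u = 0}"
    by (auto simp: Hs_def inner_add_right)
next
  show "Hs {(a,b)\<in>F. a \<bullet> u = 0} \<subseteq> {x + s *\<^sub>R u | x s. x \<in> Hs F}"
  proof
    fix y assume y: "y \<in> Hs {(a,b)\<in>F. a \<bullet> u = 0}"
    define N where "N = {(a,b)\<in>F. a \<bullet> u < 0}"
    have finN: "finite N" using fin unfolding N_def by (auto intro: finite_subset)
    define s where "s = - (\<Sum>(a,b)\<in>N. \<bar>b - a \<bullet> y\<bar> / \<bar>a \<bullet> u\<bar>)"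
    have "y - s *\<^sub>R u \<in> Hs F" unfolding Hs_def
    proof (intro CollectI ballI, clarify)
      fix a b assume ab: "(a,b) \<in> F"
      show "a \<bullet> (y - s *\<^sub>R u) \<le> b"
      proof (cases "a \<bullet> u = 0")
        case True
        then show ?thesis using y ab by (auto simp: Hs_def inner_diff_right)
      next
        case False
        with u ab have neg: "a \<bullet> u < 0" by fastforce
        hence abN: "(a,b) \<in> N" using ab by (auto simp: N_def)
        have "\<bar>b - a \<bullet> y\<bar> / \<bar>a \<bullet> u\<bar> \<le> (\<Sum>(a,b)\<in>N. \<bar>b - a \<bullet> y\<bar> / \<bar>a \<bullet> u\<bar>)"
          using member_le_sum[OF abN, of "\<lambda>(a,b). \<bar>b - a \<bullet> y\<bar> / \<bar>a \<bullet> u\<bar>"] finN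
          by auto
        hence "s \<le> - (\<bar>b - a \<bullet> y\<bar> / \<bar>a \<bullet> u\<bar>)" unfolding s_def by linarith
        also have "\<dots> \<le> (b - a \<bullet> y) / \<bar>a \<bullet> u\<bar>"
        proof -
          have "(- \<bar>b - a \<bullet> y\<bar>) / \<bar>a \<bullet> u\<bar> \<le> (b - a \<bullet> y) / \<bar>a \<bullet> u\<bar>"
            by (rule divide_right_mono) auto
          thus ?thesis by simp
        qed
        finally have h: "s \<le> (b - a \<bullet> y) / \<bar>a \<bullet> u\<bar>" .
        have "s * \<bar>a \<bullet> u\<bar> \<le> b - a \<bullet> y"
          using h neg by (subst (asm) pos_le_divide_eq) auto
        moreover have "\<bar>a \<bullet> u\<bar> = - (a \<bullet> u)" using neg by simp
        ultimately show ?thesis by (simp add: inner_diff_right)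
      qed
    qed
    moreover have "y = (y - s *\<^sub>R u) + s *\<^sub>R u" by simp
    ultimately show "y \<in> {x + s *\<^sub>R u | x s. x \<in> Hs F}" by blast
  qed
qed


lemma span_Hs:
  assumes "finite B" "finite F" "\<forall>(a,b)\<in>F. \<forall>u\<in>B. a \<bullet> u \<le> 0"
  shows "{x + v | x v. x \<in> Hs F \<and> v \<in> span B} = Hs {(a,b)\<in>F. \<forall>u\<in>B. a \<bullet> u = 0}"
  using assms
proof (induction B rule: finite_induct)
  case empty
  then show ?case by auto
next
  case (insert u B)
  define F' where "F' = {(a,b)\<in>F. \<forall>u\<in>B. a \<bullet> u = 0}"
  have IH: "{x + v | x v. x \<in> Hs F \<and> v \<in> span B} = Hs F'"
  proof -
    have "\<forall>(a,b)\<in>F. \<forall>u\<in>B. a \<bullet> u \<le> 0" using insert(5) by auto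
    from insert.IH[OF insert(4) this] show ?thesis unfolding F'_def .
  qed
  have finF': "finite F'" using insert(4) unfolding F'_def by (auto intro: finite_subset)
  have uF': "\<forall>(a,b)\<in>F'. a \<bullet> u \<le> 0" using insert(5) unfolding F'_def by auto
  have "{x + v | x v. x \<in> Hs F \<and> v \<in> span (insert u B)}
      = {y + s *\<^sub>R u | y s. y \<in> {x + v | x v. x \<in> Hs F \<and> v \<in> span B}}"
  proof (intro set_eqI iffI)
    fix z assume "z \<in> {x + v | x v. x \<in> Hs F \<and> v \<in> span (insert u B)}"
    then obtain x v where z: "z = x + v" "x \<in> Hs F" "v \<in> span (insert u B)" by blast
    then obtain k where k: "v - k *\<^sub>R u \<in> span B" by (auto simp: span_insert)
    have "z = (x + (v - k *\<^sub>R u)) + k *\<^sub>R u" using z by simp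
    thus "z \<in> {y + s *\<^sub>R u | y s. y \<in> {x + v | x v. x \<in> Hs F \<and> v \<in> span B}}"
      using z k by blast
  next
    fix z assume "z \<in> {y + s *\<^sub>R u | y s. y \<in> {x + v | x v. x \<in> Hs F \<and> v \<in> span B}}"
    then obtain x v s where z: "z = (x + v) + s *\<^sub>R u" "x \<in> Hs F" "v \<in> span B" by blast
    have "v + s *\<^sub>R u \<in> span (insert u B)"
      by (meson z(3) span_add span_mono span_scale span_base insertI1 subset_insertI subsetD)
    moreover have "z = x + (v + s *\<^sub>R u)" using z by simp
    ultimately show "z \<in> {x + v | x v. x \<in> Hs F \<and> v \<in> span (insert u B)}" using z by blast
  qed
  also have "\<dots> = {y + s *\<^sub>R u | y s. y \<in> Hs F'}" using IH by simp
  also have "\<dots> = Hs {(a,b)\<in>F'. a \<bullet> u = 0}" by (rule line_Hs[OF finF' uF'])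
  also have "{(a,b)\<in>F'. a \<bullet> u = 0} = {(a,b)\<in>F. \<forall>w\<in>insert u B. a \<bullet> w = 0}"
    unfolding F'_def by auto
  finally show ?case .
qed


lemma pos_hull_base: "finite B \<Longrightarrow> B \<subseteq> pos_hull B"
proof
  fix b assume fin: "finite B" and b: "b \<in> B"
  have "(\<Sum>b'\<in>B. (if b' = b then 1 else 0) *\<^sub>R b') = b"
  proof -
    have "(\<Sum>b'\<in>B. (if b' = b then 1 else 0) *\<^sub>R b') = (\<Sum>b'\<in>B. if b' = b then b else 0)"
      by (rule sum.cong) auto
    also have "\<dots> = b" using fin b by simp
    finally show ?thesis .
  qed
  thus "b \<in> pos_hull B" unfolding pos_hull_def
    by (intro CollectI exI[of _ "\<lambda>b'. if b' = b then 1 else 0"]) auto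
qed

lemma pos_hull_span: "pos_hull B \<subseteq> span B"
  unfolding pos_hull_def by (auto intro!: span_sum span_scale simp: span_base)

lemma span_pos_hull: "finite B \<Longrightarrow> span (pos_hull B) = span B"
  by (metis pos_hull_base pos_hull_span span_mono span_span subset_antisym)

lemma rat_poly_Hs:
  assumes "rat_polyhedron P"
  obtains F where "finite F" "P = Hs F"
  using assms unfolding rat_polyhedron_def Hs_def by blast

lemma Hs_zero: "Hs ((\<lambda>(a,b). (a,0::real)) ` F) = {d. \<forall>(a,b)\<in>F. a \<bullet> d \<le> 0}"
  unfolding Hs_def by auto

lemma rec_rec:
  assumes "rat_polyhedron P" "P \<noteq> {}"
  shows "rec_cone (rec_cone P) = rec_cone P"
proof -
  obtain F where F: "finite F" "P = Hs F" using rat_poly_Hs[OF assms(1)] .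
  have r: "rec_cone P = Hs ((\<lambda>(a,b). (a,0::real)) ` F)"
    using rec_Hs[of F] F assms(2) by (simp add: Hs_zero)
  have "0 \<in> Hs ((\<lambda>(a,b). (a,0::real)) ` F)" unfolding Hs_def by auto
  hence "rec_cone (Hs ((\<lambda>(a,b). (a,0::real)) ` F)) = {d. \<forall>(a,b)\<in>(\<lambda>(a,b). (a,0::real)) ` F. a \<bullet> d \<le> 0}"
    by (intro rec_Hs) auto
  also have "\<dots> = Hs ((\<lambda>(a,b). (a,0::real)) ` F)" unfolding Hs_def by auto
  finally show ?thesis using r by simp
qed

lemma geo:
  assumes P: "rat_polyhedron P" "P \<noteq> {}" and B: "finite B" and tau: "\<tau> = pos_hull B"
    and sub: "\<tau> \<subseteq> rec_cone P"
  shows "rec_cone (lift \<tau> P) = lift \<tau> (rec_cone P)"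
    and "aff_dim (lift \<tau> (rec_cone P)) = aff_dim (rec_cone P)"
proof -
  obtain F where F: "finite F" "P = Hs F" using rat_poly_Hs[OF P(1)] .
  define F0 where "F0 = (\<lambda>(a,b). (a,0::real)) ` F"
  have r: "rec_cone P = {d. \<forall>(a,b)\<in>F. a \<bullet> d \<le> 0}"
    using rec_Hs[of F] F P(2) by simp
  have r0: "rec_cone P = Hs F0" using r unfolding F0_def by (simp add: Hs_zero)
  have spt: "span \<tau> = span B" using tau span_pos_hull B by simp
  have BF: "\<forall>(a,b)\<in>F. \<forall>u\<in>B. a \<bullet> u \<le> 0"
    using pos_hull_base[OF B] tau sub r by blast
  have BF0: "\<forall>(a,b)\<in>F0. \<forall>u\<in>B. a \<bullet> u \<le> 0"
    using BF unfolding F0_def by auto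
  have finF0: "finite F0" using F unfolding F0_def by simp
  have L: "lift \<tau> P = Hs {(a,b)\<in>F. \<forall>u\<in>B. a \<bullet> u = 0}"
    unfolding lift_def spt F(2) using span_Hs[OF B F(1) BF] .
  have L0: "lift \<tau> (rec_cone P) = Hs {(a,b)\<in>F0. \<forall>u\<in>B. a \<bullet> u = 0}"
    unfolding lift_def spt r0 using span_Hs[OF B finF0 BF0] .
  have ne: "Hs {(a,b)\<in>F. \<forall>u\<in>B. a \<bullet> u = 0} \<noteq> {}" using P(2) F(2) unfolding Hs_def by auto
  show "rec_cone (lift \<tau> P) = lift \<tau> (rec_cone P)"
    unfolding L L0 rec_Hs[OF ne] unfolding Hs_def F0_def
    by (auto; metis (mono_tags, lifting) case_prod_conv image_eqI)
next
  define R where "R = rec_cone P"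
  have R0: "0 \<in> R" unfolding R_def rec_cone_def by simp
  have tR: "\<tau> \<subseteq> R" using sub R_def by simp
  have sub1: "lift \<tau> R \<subseteq> span R"
  proof
    fix z assume "z \<in> lift \<tau> R"
    then obtain x v where z: "z = x + v" "x \<in> R" "v \<in> span \<tau>" unfolding lift_def by blast
    have "v \<in> span R" using z(3) span_mono[OF tR] by blast
    thus "z \<in> span R" using z by (simp add: span_add span_base)
  qed
  have sub2: "R \<subseteq> lift \<tau> R" unfolding lift_def by (force intro: span_zero)
  have sp: "span (lift \<tau> R) = span R"
    by (metis sub1 sub2 span_mono span_span subset_antisym)
  have "0 \<in> lift \<tau> R" using sub2 R0 by blast
  hence "aff_dim (lift \<tau> R) = int (dim (lift \<tau> R))" by (intro aff_dim_zero hull_inc)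
  also have "\<dots> = int (dim R)" by (metis sp dim_span)
  also have "\<dots> = aff_dim R" using R0 by (intro aff_dim_zero[symmetric] hull_inc)
  finally show "aff_dim (lift \<tau> (rec_cone P)) = aff_dim (rec_cone P)" unfolding R_def .
qed


lemma regroup:
  fixes W :: "'a \<Rightarrow> int"
  assumes fin: "finite {x. W x \<noteq> 0}"
  shows "(\<Sum>y\<in>{y. (\<Sum>x\<in>{x. W x \<noteq> 0 \<and> \<psi> x \<and> f x = y}. W x) \<noteq> 0 \<and> \<Phi> y}.
            \<Sum>x\<in>{x. W x \<noteq> 0 \<and> \<psi> x \<and> f x = y}. W x)
       = (\<Sum>x\<in>{x. W x \<noteq> 0 \<and> \<psi> x \<and> \<Phi> (f x)}. W x)"
proof -
  define D where "D = {x. W x \<noteq> 0 \<and> \<psi> x \<and> \<Phi> (f x)}"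
  have finD: "finite D" using fin unfolding D_def by (auto intro: finite_subset)
  define h where "h y = (\<Sum>x\<in>{x. x \<in> D \<and> f x = y}. W x)" for y
  have eq: "{x. W x \<noteq> 0 \<and> \<psi> x \<and> f x = y} = {x. x \<in> D \<and> f x = y}" if "y \<in> f ` D" for y
    using that unfolding D_def by auto
  have "(\<Sum>y\<in>{y. (\<Sum>x\<in>{x. W x \<noteq> 0 \<and> \<psi> x \<and> f x = y}. W x) \<noteq> 0 \<and> \<Phi> y}.
            \<Sum>x\<in>{x. W x \<noteq> 0 \<and> \<psi> x \<and> f x = y}. W x) = sum h (f ` D)"
  proof (rule sum.mono_neutral_cong_left)
    show "finite (f ` D)" using finD by simp
    show "{y. (\<Sum>x\<in>{x. W x \<noteq> 0 \<and> \<psi> x \<and> f x = y}. W x) \<noteq> 0 \<and> \<Phi> y} \<subseteq> f ` D"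
    proof
      fix y assume "y \<in> {y. (\<Sum>x\<in>{x. W x \<noteq> 0 \<and> \<psi> x \<and> f x = y}. W x) \<noteq> 0 \<and> \<Phi> y}"
      then have ne: "(\<Sum>x\<in>{x. W x \<noteq> 0 \<and> \<psi> x \<and> f x = y}. W x) \<noteq> 0" and ph: "\<Phi> y" by auto
      from ne obtain x where "x \<in> {x. W x \<noteq> 0 \<and> \<psi> x \<and> f x = y}"
        by (metis empty_iff sum.empty subsetI subset_antisym)
      thus "y \<in> f ` D" using ph unfolding D_def by auto
    qed
    show "\<forall>i\<in>f ` D - {y. (\<Sum>x\<in>{x. W x \<noteq> 0 \<and> \<psi> x \<and> f x = y}. W x) \<noteq> 0 \<and> \<Phi> y}. h i = 0"
    proof
      fix y assume y: "y \<in> f ` D - {y. (\<Sum>x\<in>{x. W x \<noteq> 0 \<and> \<psi> x \<and> f x = y}. W x) \<noteq> 0 \<and> \<Phi> y}"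
      hence "\<Phi> y" unfolding D_def by auto
      with y show "h y = 0" unfolding h_def using eq by auto
    qed
    show "(\<Sum>x\<in>{x. W x \<noteq> 0 \<and> \<psi> x \<and> f x = y}. W x) = h y"
      if y: "y \<in> {y. (\<Sum>x\<in>{x. W x \<noteq> 0 \<and> \<psi> x \<and> f x = y}. W x) \<noteq> 0 \<and> \<Phi> y}" for y
    proof -
      have "y \<in> f ` D"
      proof -
        from y have ne: "(\<Sum>x\<in>{x. W x \<noteq> 0 \<and> \<psi> x \<and> f x = y}. W x) \<noteq> 0" and ph: "\<Phi> y" by auto
        from ne obtain x where "x \<in> {x. W x \<noteq> 0 \<and> \<psi> x \<and> f x = y}"
          by (metis empty_iff sum.empty subsetI subset_antisym)
        thus "y \<in> f ` D" using ph unfolding D_def by auto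
      qed
      thus "(\<Sum>x\<in>{x. W x \<noteq> 0 \<and> \<psi> x \<and> f x = y}. W x) = h y" unfolding h_def using eq by auto
    qed
  qed
  also have "\<dots> = sum W D" unfolding h_def by (rule sum.group[OF finD]) (use finD in auto)
  finally show ?thesis by (simp only: D_def)
qed


theorem lemma3:
  fixes \<Delta> S :: "(real^'n) set set" and m :: "(real^'n) set \<Rightarrow> int"
    and k :: nat and \<tau> :: "(real^'n) set"
  assumes "complete_unimodular_fan \<Delta>"
    and "tropical_cycle S m k"
    and "compatible \<Delta> S"
    and "\<tau> \<in> \<Delta>"
  shows "cycle_eq k (rec_part k (orbit_part \<tau> (cycle_wt S m k)))
                    (orbit_part \<tau> (rec_part k (cycle_wt S m k)))"
proof -
  define W where "W = cycle_wt S m k"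
  have pc: "polyhedral_complex S" using assms(2) unfolding tropical_cycle_def by simp
  have WS: "W P \<noteq> 0 \<Longrightarrow> P \<in> S" for P unfolding W_def cycle_wt_def by (auto split: if_splits)
  have Wpoly: "W P \<noteq> 0 \<Longrightarrow> rat_polyhedron P \<and> P \<noteq> {}" for P
    using WS pc unfolding polyhedral_complex_def by blast
  have finW: "finite {P. W P \<noteq> 0}"
    using WS pc unfolding polyhedral_complex_def by (auto intro: finite_subset)
  have "unimodular_cone \<tau>" using assms(1,4) unfolding complete_unimodular_fan_def by blast
  then obtain B where B: "finite B" "\<tau> = pos_hull B" unfolding unimodular_cone_def by blast
  have key: "rec_part k (orbit_part \<tau> W) C = orbit_part \<tau> (rec_part k W) C" for C
  proof -
    have "rec_part k (orbit_part \<tau> W) C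
        = (\<Sum>Q\<in>{Q. (\<Sum>P\<in>{P. W P \<noteq> 0 \<and> \<tau> \<subseteq> rec_cone P \<and> lift \<tau> P = Q}. W P) \<noteq> 0
                 \<and> (rec_cone Q = C \<and> aff_dim C = int k)}.
             \<Sum>P\<in>{P. W P \<noteq> 0 \<and> \<tau> \<subseteq> rec_cone P \<and> lift \<tau> P = Q}. W P)"
      unfolding rec_part_def orbit_part_def by simp
    also have "\<dots> = (\<Sum>P\<in>{P. W P \<noteq> 0 \<and> \<tau> \<subseteq> rec_cone P \<and>
                         (rec_cone (lift \<tau> P) = C \<and> aff_dim C = int k)}. W P)"
      by (rule regroup[OF finW, where \<psi>="\<lambda>P. \<tau> \<subseteq> rec_cone P" and f="lift \<tau>"
              and \<Phi>="\<lambda>Q. rec_cone Q = C \<and> aff_dim C = int k"])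
    also have "{P. W P \<noteq> 0 \<and> \<tau> \<subseteq> rec_cone P \<and> (rec_cone (lift \<tau> P) = C \<and> aff_dim C = int k)}
             = {P. W P \<noteq> 0 \<and> aff_dim (rec_cone P) = int k \<and>
                  (\<tau> \<subseteq> rec_cone (rec_cone P) \<and> lift \<tau> (rec_cone P) = C)}"
    proof (intro Collect_cong)
      fix P
      show "(W P \<noteq> 0 \<and> \<tau> \<subseteq> rec_cone P \<and> (rec_cone (lift \<tau> P) = C \<and> aff_dim C = int k)) =
            (W P \<noteq> 0 \<and> aff_dim (rec_cone P) = int k \<and>
                  (\<tau> \<subseteq> rec_cone (rec_cone P) \<and> lift \<tau> (rec_cone P) = C))"
      proof (cases "W P \<noteq> 0")
        case True
        with Wpoly have P: "rat_polyhedron P" "P \<noteq> {}" by auto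
        have rr: "rec_cone (rec_cone P) = rec_cone P" by (rule rec_rec[OF P])
        show ?thesis
        proof (cases "\<tau> \<subseteq> rec_cone P")
          case True
          note g = geo[OF P B(1) B(2) True]
          show ?thesis using g rr \<open>W P \<noteq> 0\<close> True by auto
        next
          case False
          then show ?thesis using rr by auto
        qed
      qed simp
    qed
    also have "(\<Sum>P\<in>{P. W P \<noteq> 0 \<and> aff_dim (rec_cone P) = int k \<and>
                  (\<tau> \<subseteq> rec_cone (rec_cone P) \<and> lift \<tau> (rec_cone P) = C)}. W P)
        = (\<Sum>C'\<in>{C'. (\<Sum>P\<in>{P. W P \<noteq> 0 \<and> aff_dim (rec_cone P) = int k \<and> rec_cone P = C'}. W P) \<noteq> 0
                 \<and> (\<tau> \<subseteq> rec_cone C' \<and> lift \<tau> C' = C)}.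
             \<Sum>P\<in>{P. W P \<noteq> 0 \<and> aff_dim (rec_cone P) = int k \<and> rec_cone P = C'}. W P)"
      by (rule regroup[OF finW, where \<psi>="\<lambda>P. aff_dim (rec_cone P) = int k" and f="rec_cone"
              and \<Phi>="\<lambda>C'. \<tau> \<subseteq> rec_cone C' \<and> lift \<tau> C' = C", symmetric])
    also have "\<dots> = orbit_part \<tau> (rec_part k W) C"
    proof -
      have "rec_part k W = (\<lambda>C'. \<Sum>P\<in>{P. W P \<noteq> 0 \<and> aff_dim (rec_cone P) = int k \<and> rec_cone P = C'}. W P)"
        unfolding rec_part_def by (intro ext sum.cong Collect_cong) auto
      thus ?thesis unfolding orbit_part_def by simp
    qed
    finally show ?thesis .
  qed
  have "rec_part k (orbit_part \<tau> W) = orbit_part \<tau> (rec_part k W)" using key by (rule ext)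
  thus ?thesis unfolding W_def[symmetric] cycle_eq_def by (intro exI[of _ "{}"]) auto
qed

end
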